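(* For $n\in\{0,1,2,\dots\}$ let \[ d_n=\frac{(-1)^n}{n!}\sum_{k=0}^{n}(-1)^kS(n,k)(2k-3)!!. \] Then $d_n\ge0$ for every $n\in\mathbb{N}=\{1,2,\dots\}$.
   Context: $S(n,k)$ are the Stirling numbers of the second kind, given by $\frac{(e^x-1)^k}{k!}=\sum_{n\ge k}S(n,k)\frac{x^n}{n!}$. Double factorials: $(2j-1)!!=1\cdot3\cdots(2j-1)$ for $j\ge1$, and $[-(2j+1)]!!=(-1)^j/(2j-1)!!$ for $j\ge0$, so $(-1)!!=1$ and $(-3)!!=-1$. *)

theory Defs
  imports Complex_Main "HOL-Combinatorics.Stirling"
begin

text \<open>odd_dfact j = (2j-1)!! for integer j: for j >= 1 the product 1*3*...*(2j-1);
  for j = -i <= 0 it is (-(2i+1))!! = (-1)^i / (2i-1)!!, so (-1)!! = 1 and (-3)!! = -1.\<close>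

definition odd_dfact :: "int \<Rightarrow> real" where
  "odd_dfact j =
     (if j \<ge> 1 then (\<Prod>i=1..nat j. real (2*i - 1))
      else (-1) ^ nat (-j) / (\<Prod>i=1..nat (-j). real (2*i - 1)))"

definition d_seq :: "nat \<Rightarrow> real" where
  "d_seq n = (-1) ^ n / fact n *
     (\<Sum>k=0..n. (-1) ^ k * real (Stirling n k) * odd_dfact (int k - 1))"

end

theory Submission imports Defs "HOL-Computational_Algebra.Formal_Power_Series" begin

lemma pascal_sum:
  fixes f :: "nat \<Rightarrow> 'a::comm_semiring_1"
  shows "(\<Sum>i=0..Suc n. of_nat (Suc n choose i) * f i) =
     (\<Sum>i=0..n. of_nat (n choose i) * f i) + (\<Sum>i=0..n. of_nat (n choose i) * f (Suc i))"
proof -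
  have 1: "(\<Sum>i=0..Suc n. of_nat (Suc n choose i) * f i) =
      f 0 + (\<Sum>i=0..n. of_nat (Suc n choose Suc i) * f (Suc i))"
    by (simp only: sum.atLeast0_atMost_Suc_shift) simp
  have 2: "\<dots> = f 0 + (\<Sum>i=0..n. of_nat (n choose i) * f (Suc i))
      + (\<Sum>i=0..n. of_nat (n choose Suc i) * f (Suc i))"
    by (simp add: sum.distrib algebra_simps)
  have 3: "f 0 + (\<Sum>i=0..n. of_nat (n choose Suc i) * f (Suc i)) =
      (\<Sum>i=0..Suc n. of_nat (n choose i) * f i)"
    by (subst sum.atLeast0_atMost_Suc_shift) simp
  have 4: "(\<Sum>i=0..Suc n. of_nat (n choose i) * f i) = (\<Sum>i=0..n. of_nat (n choose i) * f i)"
    by (simp add: sum.atLeast0_atMost_Suc binomial_eq_0 del: binomial_Suc_Suc)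
  have 5: "f 0 + (\<Sum>i=0..n. of_nat (n choose Suc i) * f (Suc i)) = (\<Sum>i=0..n. of_nat (n choose i) * f i)"
    using 3 4 by simp
  show ?thesis unfolding 1 2 5[symmetric] by (simp add: ac_simps)
qed

lemma Stirling_binom:
  "Stirling (Suc n) (Suc k) = (\<Sum>i=0..n. (n choose i) * Stirling i k)"
proof (induction n arbitrary: k)
  case 0
  then show ?case by (cases k) auto
next
  case (Suc n)
  have "(\<Sum>i=0..Suc n. (Suc n choose i) * Stirling i k) =
     (\<Sum>i=0..n. (n choose i) * Stirling i k) + (\<Sum>i=0..n. (n choose i) * Stirling (Suc i) k)"
    using pascal_sum[of n "\<lambda>i. Stirling i k"] by simp
  also have "(\<Sum>i=0..n. (n choose i) * Stirling i k) = Stirling (Suc n) (Suc k)"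
    using Suc.IH by simp
  also have "(\<Sum>i=0..n. (n choose i) * Stirling (Suc i) k) = k * Stirling (Suc n) (Suc k) + Stirling (Suc n) k"
  proof (cases k)
    case 0
    then show ?thesis by simp
  next
    case (Suc k')
    note kk = this
    have "(\<Sum>i=0..n. (n choose i) * Stirling (Suc i) k) =
      k * (\<Sum>i=0..n. (n choose i) * Stirling i k) + (\<Sum>i=0..n. (n choose i) * Stirling i k')"
      unfolding kk by (simp add: sum.distrib sum_distrib_left algebra_simps)
    also have "\<dots> = k * Stirling (Suc n) (Suc k) + Stirling (Suc n) k"
      using Suc.IH[of k] Suc.IH[of k'] kk by (simp del: Stirling.simps)
    finally show ?thesis using kk by simp
  qed
  finally show ?case by simp
qed

definition bb :: "nat \<Rightarrow> real" where "bb k = (-1)^k * odd_dfact (int k - 1)"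
definition TT :: "nat \<Rightarrow> real" where "TT n = (\<Sum>k=0..n. real (Stirling n k) * bb k)"
definition T1 :: "nat \<Rightarrow> real" where "T1 n = (\<Sum>k=0..n. real (Stirling n k) * bb (Suc k))"

lemma odd_dfact_Suc: "odd_dfact (int (Suc k)) = real (2*k+1) * odd_dfact (int k)"
proof (cases k)
  case 0
  then show ?thesis by (simp add: odd_dfact_def)
next
  case (Suc j)
  then show ?thesis by (simp add: odd_dfact_def prod.cl_ivl_Suc nat_int_add del: of_nat_Suc) (simp add: algebra_simps)
qed

lemma bb0: "bb 0 = -1"
  by (simp add: bb_def odd_dfact_def)

lemma bb_Suc: "bb (Suc k) = (1 - 2 * real k) * bb k"
proof (cases k)
  case 0
  then show ?thesis by (simp add: bb_def odd_dfact_def)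
next
  case (Suc j)
  have "bb (Suc k) = (-1)^(Suc (Suc j)) * odd_dfact (int (Suc j))" using Suc by (simp add: bb_def)
  also have "\<dots> = (-1)^(Suc (Suc j)) * (real (2*j+1) * odd_dfact (int j))" by (simp only: odd_dfact_Suc)
  also have "\<dots> = (1 - 2 * real k) * bb k" using Suc by (simp add: bb_def algebra_simps)
  finally show ?thesis .
qed

lemma TT0: "TT 0 = -1" by (simp add: TT_def bb0)

lemma T1_eq: "T1 n = 2 * TT (Suc n) - TT n"
proof -
  define K where "K = (\<Sum>k=0..n. real k * real (Stirling n k) * bb k)"
  have a: "TT (Suc n) = (\<Sum>k=0..n. real (Stirling (Suc n) (Suc k)) * bb (Suc k))"
    unfolding TT_def by (simp only: sum.atLeast0_atMost_Suc_shift) simp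
  have b: "(\<Sum>k=0..n. real (Stirling (Suc n) (Suc k)) * bb (Suc k)) =
     (\<Sum>k=0..n. real (Suc k) * real (Stirling n (Suc k)) * bb (Suc k)) + T1 n"
    unfolding T1_def by (simp add: sum.distrib algebra_simps)
  have c: "(\<Sum>k=0..n. real (Suc k) * real (Stirling n (Suc k)) * bb (Suc k)) = K"
  proof -
    have "K = (\<Sum>k=0..Suc n. real k * real (Stirling n k) * bb k)"
      unfolding K_def by (simp add: sum.atLeast0_atMost_Suc)
    also have "\<dots> = (\<Sum>k=0..n. real (Suc k) * real (Stirling n (Suc k)) * bb (Suc k))"
      by (simp only: sum.atLeast0_atMost_Suc_shift) simp
    finally show ?thesis by simp
  qed
  have d: "T1 n = TT n - 2 * K"
    unfolding T1_def TT_def K_def bb_Suc by (simp add: sum_distrib_left sum_subtractf algebra_simps)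
  show ?thesis using a b c d by simp
qed

lemma sum_Stirling_ext:
  assumes "j \<le> n"
  shows "(\<Sum>k=0..n. real (Stirling j k) * f k) = (\<Sum>k=0..j. real (Stirling j k) * f k)"
  by (rule sum.mono_neutral_right) (use assms in auto)

lemma TT_Suc_binom: "TT (Suc n) = (\<Sum>j=0..n. real (n choose j) * T1 j)"
proof -
  have "TT (Suc n) = (\<Sum>k=0..n. real (Stirling (Suc n) (Suc k)) * bb (Suc k))"
    unfolding TT_def by (simp only: sum.atLeast0_atMost_Suc_shift) simp
  also have "\<dots> = (\<Sum>k=0..n. \<Sum>j=0..n. real (n choose j) * (real (Stirling j k) * bb (Suc k)))"
    by (rule sum.cong[OF refl], simp only: Stirling_binom of_nat_sum of_nat_mult sum_distrib_right) (simp add: algebra_simps)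
  also have "\<dots> = (\<Sum>j=0..n. real (n choose j) * (\<Sum>k=0..n. real (Stirling j k) * bb (Suc k)))"
    by (subst sum.swap) (simp add: sum_distrib_left)
  also have "\<dots> = (\<Sum>j=0..n. real (n choose j) * T1 j)"
    by (rule sum.cong[OF refl]) (use sum_Stirling_ext[of _ n "\<lambda>k. bb (Suc k)"] in \<open>simp add: T1_def\<close>)
  finally show ?thesis .
qed


lemma sum_reflect: fixes n :: nat shows "(\<Sum>i=0..n. f (n - i)) = (\<Sum>i=0..n. (f i :: 'a::comm_monoid_add))"
proof -
  have "(\<Sum>i<Suc n. f (Suc n - Suc i)) = (\<Sum>i<Suc n. f i)"
    by (rule sum.nat_diff_reindex)
  then show ?thesis by (simp add: atLeast0AtMost lessThan_Suc_atMost)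
qed

definition gg :: "nat \<Rightarrow> real" where "gg n = TT n / fact n"
definition GG :: "real fps" where "GG = Abs_fps gg"
abbreviation EE :: "real fps" where "EE \<equiv> fps_exp 1"

lemma fact_cancel: "real (Suc m) * (x / fact (Suc m)) = x / fact m"
proof -
  have "(fact (Suc m)::real) = real (Suc m) * fact m" by (simp only: fact_Suc)
  then show ?thesis by simp
qed

lemma gg_key: "2 * (of_nat (m+1) * gg (m+1)) - gg m = T1 m / fact m"
  unfolding gg_def T1_eq using fact_cancel[of m "TT (Suc m)"] by (simp add: diff_divide_distrib)

lemma TT_Suc_fact: "TT (Suc n) / fact n = (\<Sum>i=0..n. (1 / fact i) * (T1 (n - i) / fact (n - i)))"
proof -
  have "TT (Suc n) / fact n = (\<Sum>j=0..n. T1 j / (fact j * fact (n - j)))"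
    unfolding TT_Suc_binom sum_divide_distrib
    by (rule sum.cong[OF refl]) (simp add: binomial_fact field_simps)
  also have "\<dots> = (\<Sum>i=0..n. T1 (n - i) / (fact (n - i) * fact (n - (n - i))))"
    by (rule sum_reflect[of "\<lambda>j. T1 j / (fact j * fact (n - j))" n, symmetric])
  also have "\<dots> = (\<Sum>i=0..n. (1 / fact i) * (T1 (n - i) / fact (n - i)))"
    by (rule sum.cong[OF refl]) (simp add: field_simps)
  finally show ?thesis .
qed

lemma G_ode: "fps_deriv GG = EE * (fps_const 2 * fps_deriv GG - GG)"
proof (rule fps_ext)
  fix n
  have "fps_nth (fps_deriv GG) n = TT (Suc n) / fact n"
    using fact_cancel[of n "TT (Suc n)"] by (simp add: GG_def gg_def)
  also have "\<dots> = (\<Sum>i=0..n. fps_nth EE i * fps_nth (fps_const 2 * fps_deriv GG - GG) (n - i))"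
    unfolding TT_Suc_fact
    by (rule sum.cong[OF refl]) (simp add: GG_def gg_key[symmetric])
  also have "\<dots> = fps_nth (EE * (fps_const 2 * fps_deriv GG - GG)) n"
    by (simp add: fps_mult_nth)
  finally show "fps_nth (fps_deriv GG) n = fps_nth (EE * (fps_const 2 * fps_deriv GG - GG)) n" .
qed

lemma deriv_zero:
  fixes q C :: "real fps"
  assumes d: "fps_deriv q = C * q" and q0: "fps_nth q 0 = 0"
  shows "q = 0"
proof -
  have "\<forall>m\<le>n. fps_nth q m = 0" for n
  proof (induction n)
    case 0 then show ?case using q0 by simp
  next
    case (Suc n)
    have "fps_nth (fps_deriv q) n = (\<Sum>i=0..n. fps_nth C i * fps_nth q (n - i))" using d by (simp add: fps_mult_nth)
    also have "\<dots> = 0" using Suc.IH by (intro sum.neutral) auto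
    finally have "fps_nth q (Suc n) = 0" by simp
    then show ?case using Suc.IH le_Suc_eq by auto
  qed
  then show ?thesis by (intro fps_ext) auto
qed

lemma GG_sq: "GG * GG = fps_const 2 * EE - 1"
proof -
  define E2 where "E2 = fps_const 2 * EE - 1"
  define q where "q = GG * GG - E2"
  have E2G: "E2 * fps_deriv GG = EE * GG"
    using G_ode unfolding E2_def by (simp add: algebra_simps)
  have dE: "fps_deriv EE = EE" by simp
  have dq: "fps_deriv q = fps_const 2 * GG * fps_deriv GG - fps_const 2 * EE"
    unfolding q_def E2_def by (simp add: algebra_simps fps_const_add[symmetric] fps_numeral_fps_const)
  have "E2 * fps_deriv q = fps_const 2 * GG * (E2 * fps_deriv GG) - fps_const 2 * EE * E2"
    unfolding dq by (simp add: algebra_simps)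
  also have "\<dots> = (fps_const 2 * EE) * q"
    unfolding E2G q_def by (simp add: algebra_simps)
  finally have h: "E2 * fps_deriv q = (fps_const 2 * EE) * q" .
  have E20: "fps_nth E2 0 = 1" unfolding E2_def by simp
  have "fps_deriv q = (inverse E2 * (fps_const 2 * EE)) * q"
  proof -
    have "fps_deriv q = (inverse E2 * E2) * fps_deriv q" using inverse_mult_eq_1[of E2] E20 by simp
    also have "\<dots> = inverse E2 * (E2 * fps_deriv q)" by (simp add: mult.assoc)
    finally show ?thesis unfolding h by (simp add: mult.assoc)
  qed
  moreover have "fps_nth q 0 = 0"
    unfolding q_def E2_def by (simp add: GG_def gg_def TT0)
  ultimately have "q = 0" by (rule deriv_zero)
  then show ?thesis unfolding q_def E2_def by (simp only: right_minus_eq)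
qed

lemma GG_rel: "fps_const 2 * GG * fps_deriv GG = GG * GG + 1"
proof -
  have "fps_deriv (GG * GG) = fps_deriv (fps_const 2 * EE - 1)" using GG_sq by simp
  then have h: "fps_const 2 * GG * fps_deriv GG = fps_const 2 * EE"
    by (simp add: algebra_simps fps_const_add[symmetric] fps_numeral_fps_const)
  have h2: "GG * GG + 1 = fps_const 2 * EE" unfolding GG_sq by simp
  show ?thesis by (simp only: h h2)
qed


lemma coeff_rel: "2 * (\<Sum>i=0..n. gg i * (of_nat (n - i + 1) * gg (n - i + 1))) =
   (\<Sum>i=0..n. gg i * gg (n - i)) + (if n = 0 then 1 else 0)"
proof -
  have 0: "fps_nth (fps_const 2 * GG * fps_deriv GG) n = fps_nth (GG * GG + 1) n"
    using GG_rel by simp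
  have 1: "fps_nth (fps_const 2 * GG * fps_deriv GG) n = 2 * (\<Sum>i=0..n. gg i * (of_nat (n - i + 1) * gg (n - i + 1)))"
    unfolding mult.assoc fps_mult_left_const_nth by (simp only: fps_mult_nth fps_deriv_nth GG_def fps_nth_Abs_fps)
  have 2: "fps_nth (GG * GG + 1) n = (\<Sum>i=0..n. gg i * gg (n - i)) + (if n = 0 then 1 else 0)"
    by (simp add: fps_mult_nth GG_def)
  show ?thesis using 0 1 2 by simp
qed

lemma d_gg: "d_seq n = (-1)^n * gg n"
  by (simp add: d_seq_def gg_def TT_def bb_def sum_distrib_left sum_divide_distrib algebra_simps)

lemma gg_d: "gg n = (-1)^n * d_seq n"
  by (simp add: d_gg)

lemma sign_mult: "i \<le> n \<Longrightarrow> ((-1::real)^i * (-1)^(n - i + 1)) = (-1)^(n+1)"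
  by (simp add: power_add[symmetric])

lemma sign_mult2: "i \<le> n \<Longrightarrow> ((-1::real)^i * (-1)^(n - i)) = (-1)^n"
  by (simp add: power_add[symmetric])

lemma d_rel:
  assumes "n \<ge> 1"
  shows "2 * (\<Sum>i=0..n. d_seq i * (of_nat (n - i + 1) * d_seq (n - i + 1))) +
     (\<Sum>i=0..n. d_seq i * d_seq (n - i)) = 0"
proof -
  have A: "(\<Sum>i=0..n. gg i * (of_nat (n - i + 1) * gg (n - i + 1))) =
      (-1)^(n+1) * (\<Sum>i=0..n. d_seq i * (of_nat (n - i + 1) * d_seq (n - i + 1)))"
    unfolding sum_distrib_left
  proof (rule sum.cong[OF refl])
    fix i assume "i \<in> {0..n}"
    then have "i \<le> n" by simp
    then show "gg i * (of_nat (n - i + 1) * gg (n - i + 1)) =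
      (-1)^(n+1) * (d_seq i * (of_nat (n - i + 1) * d_seq (n - i + 1)))"
    proof -
      have "gg i * (of_nat (n - i + 1) * gg (n - i + 1)) =
        ((-1)^i * (-1)^(n - i + 1)) * (d_seq i * (of_nat (n - i + 1) * d_seq (n - i + 1)))"
        unfolding gg_d by (simp only: mult_ac)
      then show ?thesis unfolding sign_mult[OF \<open>i \<le> n\<close>] .
    qed
  qed
  have B: "(\<Sum>i=0..n. gg i * gg (n - i)) = (-1)^n * (\<Sum>i=0..n. d_seq i * d_seq (n - i))"
    unfolding sum_distrib_left
  proof (rule sum.cong[OF refl])
    fix i assume "i \<in> {0..n}"
    then have "i \<le> n" by simp
    then show "gg i * gg (n - i) = (-1)^n * (d_seq i * d_seq (n - i))"
    proof -
      have "gg i * gg (n - i) = ((-1)^i * (-1)^(n - i)) * (d_seq i * d_seq (n - i))"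
        unfolding gg_d by (simp only: mult_ac)
      then show ?thesis unfolding sign_mult2[OF \<open>i \<le> n\<close>] .
    qed
  qed
  have "2 * ((-1)^(n+1) * (\<Sum>i=0..n. d_seq i * (of_nat (n - i + 1) * d_seq (n - i + 1)))) =
     (-1)^n * (\<Sum>i=0..n. d_seq i * d_seq (n - i))"
    using coeff_rel[of n] assms unfolding A B by simp
  then have "(-1)^n * (2 * (\<Sum>i=0..n. d_seq i * (of_nat (n - i + 1) * d_seq (n - i + 1))) +
     (\<Sum>i=0..n. d_seq i * d_seq (n - i))) = 0"
    by (simp add: algebra_simps)
  then show ?thesis by simp
qed

lemma d0: "d_seq 0 = -1"
  by (simp add: d_gg gg_def TT0)

lemma d1: "d_seq 1 = 1"
proof -
  have "2 * (gg 0 * gg 1) = gg 0 * gg 0 + 1" using coeff_rel[of 0] by simp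
  moreover have "gg 0 = -1" by (simp add: gg_def TT0)
  ultimately have "gg 1 = -1" by simp
  then show ?thesis by (simp add: d_gg)
qed

lemma split3: "(\<Sum>i=0..Suc m. f i) = f 0 + (\<Sum>i=1..m. f i) + (f (Suc m) :: real)"
  by (simp add: sum.atLeast0_atMost_Suc sum.atLeast_Suc_atMost)

lemma d_nonneg: "n \<ge> 1 \<Longrightarrow> d_seq n \<ge> 0"
proof (induction n rule: less_induct)
  case (less n)
  show ?case
  proof (cases "n = 1")
    case True then show ?thesis using d1 by simp
  next
    case False
    then obtain m where n: "n = Suc (Suc m)" using less.prems
      by (metis One_nat_def Suc_le_D le_SucE not0_implies_Suc)
    have IH: "d_seq j \<ge> 0" if "1 \<le> j" "j \<le> Suc m" for j
      using less.IH[of j] that n by simp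
    define A where "A = (\<Sum>i=1..m. d_seq i * (of_nat (Suc m - i + 1) * d_seq (Suc m - i + 1)))"
    define B where "B = (\<Sum>i=1..m. d_seq i * d_seq (Suc m - i))"
    have A0: "A \<ge> 0" unfolding A_def
      by (rule sum_nonneg) (auto intro!: mult_nonneg_nonneg IH)
    have B0: "B \<ge> 0" unfolding B_def
      by (rule sum_nonneg) (auto intro!: mult_nonneg_nonneg IH)
    have r: "2 * (\<Sum>i=0..Suc m. d_seq i * (of_nat (Suc m - i + 1) * d_seq (Suc m - i + 1))) +
     (\<Sum>i=0..Suc m. d_seq i * d_seq (Suc m - i)) = 0"
      using d_rel[of "Suc m"] by simp
    then have "2 * (- (real (Suc m + 1) * d_seq (Suc (Suc m))) + A + d_seq (Suc m)) +
        (- d_seq (Suc m) + B - d_seq (Suc m)) = 0"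
      unfolding split3 A_def B_def using d0 d1 by simp
    then have "2 * real (Suc m + 1) * d_seq (Suc (Suc m)) = 2 * A + B" by (simp add: algebra_simps)
    then have "d_seq (Suc (Suc m)) = (2 * A + B) / (2 * real (Suc m + 1))"
      by (simp add: field_simps)
    then show ?thesis using A0 B0 n by simp
  qed
qed

theorem theorem6p4:
  fixes n :: nat
  assumes "n \<ge> 1"
  shows "d_seq n \<ge> 0"
  using d_nonneg assms by simp

end
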